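(* Let $p:\tilde{Q}\to Q$ be a covering of finite quandles such that $\mathrm{Aut}(p)$ acts transitively on each fiber. If $y\in p^{-1}(x)$ for some $x\in Q$ and $\beta\in\mathrm{Inn}(\tilde{Q})$ satisfies $\beta(y)=y$, then $\beta$ acts as the identity on the fiber $p^{-1}(x)$. Hence if $y_0,y_1,y_2\in p^{-1}(x)$ and $(y_0,y_1)$ and $(y_0,y_2)$ lie in the same orbit of $\mathrm{Inn}(\tilde{Q})$ acting diagonally on pairs, then $y_1=y_2$.
   Context: A quandle is a set with operation $*$ satisfying $a*a=a$; unique right division; $(a*b)*c=(a*c)*(b*c)$. $R_a(y)=y*a$; $\mathrm{Inn}(\tilde Q)$ is the group generated by the $R_a$, $a\in\tilde Q$. A covering is a quandle epimorphism $p:\tilde Q\to Q$ with $p(y_1)=p(y_2)\Rightarrow R_{y_1}=R_{y_2}$; $\mathrm{Aut}(p)$ is the group of automorphisms $\lambda$ of $\tilde Q$ with $p\circ\lambda=p$. *)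

theory Defs
  imports Main
begin

definition quandle :: "'a set \<Rightarrow> ('a \<Rightarrow> 'a \<Rightarrow> 'a) \<Rightarrow> bool" where
  "quandle Q op \<longleftrightarrow>
     (\<forall>a\<in>Q. \<forall>b\<in>Q. op a b \<in> Q) \<and>
     (\<forall>a\<in>Q. op a a = a) \<and>
     (\<forall>a\<in>Q. \<forall>b\<in>Q. \<exists>!c. c \<in> Q \<and> op c a = b) \<and>
     (\<forall>a\<in>Q. \<forall>b\<in>Q. \<forall>c\<in>Q. op (op a b) c = op (op a c) (op b c))"

definition Rmap :: "'a set \<Rightarrow> ('a \<Rightarrow> 'a \<Rightarrow> 'a) \<Rightarrow> 'a \<Rightarrow> 'a \<Rightarrow> 'a" where
  "Rmap Q op a = (\<lambda>y. if y \<in> Q then op y a else y)"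

definition Rinv :: "'a set \<Rightarrow> ('a \<Rightarrow> 'a \<Rightarrow> 'a) \<Rightarrow> 'a \<Rightarrow> 'a \<Rightarrow> 'a" where
  "Rinv Q op a = (\<lambda>y. if y \<in> Q then (THE c. c \<in> Q \<and> op c a = y) else y)"

inductive_set Inn :: "'a set \<Rightarrow> ('a \<Rightarrow> 'a \<Rightarrow> 'a) \<Rightarrow> ('a \<Rightarrow> 'a) set"
  for Q op where
  Inn_id: "id \<in> Inn Q op"
| Inn_R: "f \<in> Inn Q op \<Longrightarrow> a \<in> Q \<Longrightarrow> Rmap Q op a \<circ> f \<in> Inn Q op"
| Inn_Rinv: "f \<in> Inn Q op \<Longrightarrow> a \<in> Q \<Longrightarrow> Rinv Q op a \<circ> f \<in> Inn Q op"

definition quandle_hom ::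
  "'a set \<Rightarrow> ('a \<Rightarrow> 'a \<Rightarrow> 'a) \<Rightarrow> 'b set \<Rightarrow> ('b \<Rightarrow> 'b \<Rightarrow> 'b) \<Rightarrow> ('a \<Rightarrow> 'b) \<Rightarrow> bool" where
  "quandle_hom Q1 op1 Q2 op2 f \<longleftrightarrow>
     (\<forall>a\<in>Q1. f a \<in> Q2) \<and> (\<forall>a\<in>Q1. \<forall>b\<in>Q1. f (op1 a b) = op2 (f a) (f b))"

definition covering ::
  "'a set \<Rightarrow> ('a \<Rightarrow> 'a \<Rightarrow> 'a) \<Rightarrow> 'b set \<Rightarrow> ('b \<Rightarrow> 'b \<Rightarrow> 'b) \<Rightarrow> ('a \<Rightarrow> 'b) \<Rightarrow> bool" where
  "covering Qt opt Q op p \<longleftrightarrow>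
     quandle Qt opt \<and> quandle Q op \<and> quandle_hom Qt opt Q op p \<and> p ` Qt = Q \<and>
     (\<forall>y1\<in>Qt. \<forall>y2\<in>Qt. p y1 = p y2 \<longrightarrow> (\<forall>z\<in>Qt. opt z y1 = opt z y2))"

definition Aut_cov ::
  "'a set \<Rightarrow> ('a \<Rightarrow> 'a \<Rightarrow> 'a) \<Rightarrow> ('a \<Rightarrow> 'b) \<Rightarrow> ('a \<Rightarrow> 'a) set" where
  "Aut_cov Qt opt p = {l. bij_betw l Qt Qt \<and> quandle_hom Qt opt Qt opt l \<and>
                          (\<forall>y\<in>Qt. p (l y) = p y)}"

end

theory Submission
  imports Defs
begin

lemma Rinv_prop:
  assumes "quandle Q op" "a \<in> Q" "w \<in> Q"
  shows "Rinv Q op a w \<in> Q \<and> op (Rinv Q op a w) a = w"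
proof -
  have "\<exists>!c. c \<in> Q \<and> op c a = w" using assms unfolding quandle_def by blast
  from theI'[OF this] show ?thesis using assms(3) unfolding Rinv_def by simp
qed

lemma Rinv_eq:
  assumes "quandle Q op" "a \<in> Q" "w \<in> Q" "c \<in> Q" "op c a = w"
  shows "Rinv Q op a w = c"
proof -
  have "\<exists>!c. c \<in> Q \<and> op c a = w" using assms unfolding quandle_def by blast
  from the1_equality[OF this] show ?thesis using assms unfolding Rinv_def by simp
qed

lemma cov_R:
  assumes "covering Qt opt Q op p" "y1 \<in> Qt" "y2 \<in> Qt" "z \<in> Qt" "p y1 = p y2"
  shows "opt z y1 = opt z y2"
  using assms unfolding covering_def by blast

lemma Inn_closed:
  assumes "quandle Q op" "f \<in> Inn Q op" "y \<in> Q"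
  shows "f y \<in> Q"
  using assms(2,3)
proof (induction f rule: Inn.induct)
  case Inn_id then show ?case by simp
next
  case (Inn_R f a) then show ?case using assms(1) unfolding quandle_def Rmap_def by auto
next
  case (Inn_Rinv f a) then show ?case using Rinv_prop[OF assms(1)] by auto
qed

lemma Inn_commute:
  assumes cov: "covering Qt opt Q op p" and l: "l \<in> Aut_cov Qt opt p"
    and "f \<in> Inn Qt opt" "y \<in> Qt"
  shows "l (f y) = f (l y)"
  using assms(3,4)
proof (induction f rule: Inn.induct)
  case Inn_id then show ?case by simp
next
  case (Inn_R f a)
  have q: "quandle Qt opt" using cov unfolding covering_def by blast
  have lQ: "\<And>z. z \<in> Qt \<Longrightarrow> l z \<in> Qt" and lh: "\<And>u v. u \<in> Qt \<Longrightarrow> v \<in> Qt \<Longrightarrow> l (opt u v) = opt (l u) (l v)"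
    and lp: "\<And>z. z \<in> Qt \<Longrightarrow> p (l z) = p z"
    using l unfolding Aut_cov_def quandle_hom_def by auto
  have fy: "f y \<in> Qt" using Inn_closed[OF q Inn_R(1) Inn_R(4)] .
  have fly: "f (l y) \<in> Qt" using Inn_closed[OF q Inn_R(1) lQ[OF Inn_R(4)]] .
  have cv: "opt (f (l y)) (l a) = opt (f (l y)) a"
    using cov_R[OF cov lQ[OF Inn_R(2)] Inn_R(2) fly] lp[OF Inn_R(2)] by blast
  have "l (Rmap Qt opt a (f y)) = l (opt (f y) a)" using fy by (simp add: Rmap_def)
  also have "\<dots> = opt (f (l y)) (l a)" using lh[OF fy Inn_R(2)] Inn_R by simp
  also have "\<dots> = Rmap Qt opt a (f (l y))" using cv fly by (simp add: Rmap_def)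
  finally show ?case by simp
next
  case (Inn_Rinv f a)
  have q: "quandle Qt opt" using cov unfolding covering_def by blast
  have lQ: "\<And>z. z \<in> Qt \<Longrightarrow> l z \<in> Qt" and lh: "\<And>u v. u \<in> Qt \<Longrightarrow> v \<in> Qt \<Longrightarrow> l (opt u v) = opt (l u) (l v)"
    and lp: "\<And>z. z \<in> Qt \<Longrightarrow> p (l z) = p z"
    using l unfolding Aut_cov_def quandle_hom_def by auto
  have fy: "f y \<in> Qt" using Inn_closed[OF q Inn_Rinv(1) Inn_Rinv(4)] .
  have fly: "f (l y) \<in> Qt" using Inn_closed[OF q Inn_Rinv(1) lQ[OF Inn_Rinv(4)]] .
  define c where "c = Rinv Qt opt a (f y)"
  have c: "c \<in> Qt" "opt c a = f y" using Rinv_prop[OF q Inn_Rinv(2) fy] c_def by auto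
  have cv: "opt (l c) (l a) = opt (l c) a"
    using cov_R[OF cov lQ[OF Inn_Rinv(2)] Inn_Rinv(2) lQ[OF c(1)]] lp[OF Inn_Rinv(2)] by blast
  have "opt (l c) a = f (l y)" using cv lh[OF c(1) Inn_Rinv(2)] c(2) Inn_Rinv by simp
  then have "Rinv Qt opt a (f (l y)) = l c" using Rinv_eq[OF q Inn_Rinv(2) fly lQ[OF c(1)]] by simp
  then show ?case using c_def by simp
qed

theorem mainTheorem12:
  fixes Qt :: "'a set" and opt :: "'a \<Rightarrow> 'a \<Rightarrow> 'a"
    and Q :: "'b set" and op :: "'b \<Rightarrow> 'b \<Rightarrow> 'b" and p :: "'a \<Rightarrow> 'b"
  assumes "finite Qt" and "finite Q"
    and "covering Qt opt Q op p"
    and trans: "\<forall>y1\<in>Qt. \<forall>y2\<in>Qt. p y1 = p y2 \<longrightarrow> (\<exists>l\<in>Aut_cov Qt opt p. l y1 = y2)"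
  shows "(\<forall>x\<in>Q. \<forall>y\<in>Qt. \<forall>\<beta>\<in>Inn Qt opt. p y = x \<and> \<beta> y = y \<longrightarrow>
            (\<forall>z\<in>Qt. p z = x \<longrightarrow> \<beta> z = z))
       \<and> (\<forall>x\<in>Q. \<forall>y0\<in>Qt. \<forall>y1\<in>Qt. \<forall>y2\<in>Qt.
            p y0 = x \<and> p y1 = x \<and> p y2 = x \<and>
            (\<exists>\<beta>\<in>Inn Qt opt. \<beta> y0 = y0 \<and> \<beta> y1 = y2) \<longrightarrow> y1 = y2)"
proof -
  have P1: "\<beta> z = z" if h: "y \<in> Qt" "\<beta> \<in> Inn Qt opt" "\<beta> y = y" "z \<in> Qt" "p z = p y" for y \<beta> z
  proof -
    have "\<exists>l\<in>Aut_cov Qt opt p. l y = z" using trans h(1,4) h(5)[symmetric] by blast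
    then obtain l where l: "l \<in> Aut_cov Qt opt p" "l y = z" by blast
    have "\<beta> z = \<beta> (l y)" using l by simp
    also have "\<dots> = l (\<beta> y)" using Inn_commute[OF assms(3) l(1) h(2,1)] by simp
    also have "\<dots> = z" using h(3) l(2) by simp
    finally show ?thesis .
  qed
  have A: "\<forall>x\<in>Q. \<forall>y\<in>Qt. \<forall>\<beta>\<in>Inn Qt opt. p y = x \<and> \<beta> y = y \<longrightarrow>
            (\<forall>z\<in>Qt. p z = x \<longrightarrow> \<beta> z = z)"
    using P1 by metis
  have B: "\<forall>x\<in>Q. \<forall>y0\<in>Qt. \<forall>y1\<in>Qt. \<forall>y2\<in>Qt.
            p y0 = x \<and> p y1 = x \<and> p y2 = x \<and>
            (\<exists>\<beta>\<in>Inn Qt opt. \<beta> y0 = y0 \<and> \<beta> y1 = y2) \<longrightarrow> y1 = y2"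
    using P1 by metis
  show ?thesis using A B by blast
qed

end
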